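(* Over a unary alphabet $\{a\}$, a language is accepted by some poNFA if and only if it is $\mathcal{R}$-trivial.
   Context: A poNFA is an NFA whose reachability relation on states ($p\le q$ iff $q\in p\cdot w$ for some word $w$) is a partial order. $\mathrm{sub}_k(v)$ is the set of subsequences of $v$ of length at most $k$; $u\sim_k v$ iff $\mathrm{sub}_k(u)=\mathrm{sub}_k(v)$; $x\sim^{\mathcal{R}}_k y$ iff each prefix of $x$ is $\sim_k$-equivalent to some prefix of $y$ and vice versa. A regular language is $\mathcal{R}$-trivial if it is a union of $\sim^{\mathcal{R}}_k$-classes for some $k\ge0$. *)

theory Defs
  imports Main "HOL-Library.Sublist"
begin

record ('s, 'a) nfa =
  states :: "'s set"
  init   :: "'s set"
  trans  :: "'s \<Rightarrow> 'a \<Rightarrow> 's set"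
  final  :: "'s set"

definition nfa_wf :: "('s, 'a) nfa \<Rightarrow> bool" where
  "nfa_wf A \<longleftrightarrow> finite (states A) \<and> init A \<subseteq> states A \<and> final A \<subseteq> states A
     \<and> (\<forall>q \<in> states A. \<forall>x. trans A q x \<subseteq> states A)"

fun delta_star :: "('s, 'a) nfa \<Rightarrow> 's \<Rightarrow> 'a list \<Rightarrow> 's set" where
  "delta_star A q [] = {q}"
| "delta_star A q (x # w) = (\<Union>p \<in> trans A q x. delta_star A p w)"

definition lang :: "('s, 'a) nfa \<Rightarrow> 'a list set" where
  "lang A = {w. \<exists>q \<in> init A. delta_star A q w \<inter> final A \<noteq> {}}"

definition reach :: "('s, 'a) nfa \<Rightarrow> 's \<Rightarrow> 's \<Rightarrow> bool" where
  "reach A p q \<longleftrightarrow> (\<exists>w. q \<in> delta_star A p w)"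

text \<open>poNFA: the reachability relation on the states is a partial order
  (it is always reflexive and transitive, so this amounts to antisymmetry).\<close>
definition poNFA :: "('s, 'a) nfa \<Rightarrow> bool" where
  "poNFA A \<longleftrightarrow> nfa_wf A \<and>
     (\<forall>p \<in> states A. reach A p p) \<and>
     (\<forall>p \<in> states A. \<forall>q \<in> states A. \<forall>r \<in> states A. reach A p q \<and> reach A q r \<longrightarrow> reach A p r) \<and>
     (\<forall>p \<in> states A. \<forall>q \<in> states A. reach A p q \<and> reach A q p \<longrightarrow> p = q)"

definition regular :: "'a list set \<Rightarrow> bool" where
  "regular L \<longleftrightarrow> (\<exists>A :: (nat, 'a) nfa. nfa_wf A \<and> lang A = L)"

definition sub_k :: "nat \<Rightarrow> 'a list \<Rightarrow> 'a list set" where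
  "sub_k k v = {u. subseq u v \<and> length u \<le> k}"

definition sim_k :: "nat \<Rightarrow> 'a list \<Rightarrow> 'a list \<Rightarrow> bool" where
  "sim_k k u v \<longleftrightarrow> sub_k k u = sub_k k v"

definition simR_k :: "nat \<Rightarrow> 'a list \<Rightarrow> 'a list \<Rightarrow> bool" where
  "simR_k k x y \<longleftrightarrow>
     (\<forall>x'. prefix x' x \<longrightarrow> (\<exists>y'. prefix y' y \<and> sim_k k x' y')) \<and>
     (\<forall>y'. prefix y' y \<longrightarrow> (\<exists>x'. prefix x' x \<and> sim_k k x' y'))"

definition R_trivial :: "'a list set \<Rightarrow> bool" where
  "R_trivial L \<longleftrightarrow> regular L \<and>
     (\<exists>k. \<forall>x y. simR_k k x y \<longrightarrow> (x \<in> L \<longleftrightarrow> y \<in> L))"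

end

theory Submission
  imports Defs
begin

definition U :: "('s, 'a) nfa \<Rightarrow> 's \<Rightarrow> 's set" where
  "U A q = {r \<in> states A. reach A q r}"

lemma unary_eq:
  fixes a :: 'a
  assumes un: "(UNIV :: 'a set) = {a}" and l: "length w = length (v::'a list)"
  shows "w = v"
proof -
  have "\<And>x::'a. x = a" using un by blast
  then show ?thesis using l by (metis nth_equalityI)
qed

lemma delta_append:
  "delta_star A q (u @ v) = (\<Union>p \<in> delta_star A q u. delta_star A p v)"
  by (induction u arbitrary: q) auto

lemma delta_states:
  "nfa_wf A \<Longrightarrow> q \<in> states A \<Longrightarrow> delta_star A q w \<subseteq> states A"
  by (induction w arbitrary: q) (auto simp: nfa_wf_def, blast)

lemma loop_lemma:
  assumes "q \<in> trans A q x" "q' \<in> delta_star A q w"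
  shows "q' \<in> delta_star A q (replicate t x @ w)"
  using assms by (induction t) auto

lemma stab:
  fixes A :: "('s,'a) nfa" and a :: 'a
  assumes un: "(UNIV::'a set) = {a}" and po: "poNFA A"
  shows "q \<in> states A \<Longrightarrow> q' \<in> delta_star A q w \<Longrightarrow> card (U A q) \<le> length w
     \<Longrightarrow> card (U A q) \<le> length v \<Longrightarrow> q' \<in> delta_star A q v"
proof (induction "card (U A q)" arbitrary: q w v rule: less_induct)
  case less
  note outer = less.hyps
  have wf: "nfa_wf A" using po poNFA_def by blast
  have fin: "finite (U A q)" using wf unfolding U_def nfa_wf_def by auto
  have "reach A q q" unfolding reach_def by (rule exI[of _ "[]"]) simp
  hence qU: "q \<in> U A q" using less.prems(1) unfolding U_def by auto
  hence c1: "card (U A q) \<ge> 1" using fin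
    by (metis One_nat_def Suc_leI card_gt_0_iff empty_iff)
  have allA: "\<And>x::'a. x = a" using un by blast
  show ?case using less.prems(2,3,4)
  proof (induction "length w" arbitrary: w v rule: less_induct)
    case less
    obtain x w0 where w: "w = x # w0" using less.prems(2) c1 by (cases w) auto
    obtain y v0 where v: "v = y # v0" using less.prems(3) c1 by (cases v) auto
    have xa: "x = a" "y = a" using allA by auto
    from less.prems(1) obtain p where p: "p \<in> trans A q a" "q' \<in> delta_star A p w0"
      using w xa by auto
    have pS: "p \<in> states A" using p(1) wf \<open>q \<in> states A\<close> unfolding nfa_wf_def by blast
    show ?case
    proof (cases "p = q")
      case True
      show ?thesis
      proof (cases "card (U A q) \<le> length w0")
        case True
        show ?thesis
          by (rule less.hyps[of w0 v]) (use w True less.prems p \<open>p = q\<close> in auto)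
      next
        case False
        have "v = replicate (length v - length w0) a @ w0"
          by (rule unary_eq[OF un]) (use False less.prems(3) in auto)
        moreover have "q' \<in> delta_star A q (replicate (length v - length w0) a @ w0)"
          by (rule loop_lemma) (use p \<open>p = q\<close> in auto)
        ultimately show ?thesis by simp
      qed
    next
      case False
      have rqp: "reach A q p" unfolding reach_def
        by (rule exI[of _ "[a]"]) (use p(1) in auto)
      have sub: "U A p \<subseteq> U A q"
        using po rqp pS \<open>q \<in> states A\<close> unfolding U_def poNFA_def by blast
      have "q \<notin> U A p"
        using po rqp pS \<open>q \<in> states A\<close> False unfolding U_def poNFA_def by blast
      hence "U A p \<subset> U A q" using sub qU by blast
      hence lt: "card (U A p) < card (U A q)" using fin psubset_card_mono by blast
      have "q' \<in> delta_star A p v0"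
        by (rule outer[OF lt pS p(2)]) (use lt less.prems w v in auto)
      thus ?thesis using v xa p(1) by auto
    qed
  qed
qed

lemma subseq_unary:
  fixes a :: 'a
  assumes un: "(UNIV :: 'a set) = {a}"
  shows "subseq t u \<longleftrightarrow> length t \<le> length (u::'a list)"
proof
  assume "subseq t u" thus "length t \<le> length u" by (rule list_emb_length)
next
  assume l: "length t \<le> length u"
  have "u = t @ replicate (length u - length t) a"
    by (rule unary_eq[OF un]) (use l in auto)
  moreover have "subseq t (t @ replicate (length u - length t) a)" by (metis prefix_imp_subseq prefixI)
  ultimately show "subseq t u" by simp
qed

lemma sim_unary:
  fixes a :: 'a
  assumes un: "(UNIV :: 'a set) = {a}"
  shows "sim_k k u v \<longleftrightarrow> min (length u) k = min (length (v::'a list)) k"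
proof -
  have S: "\<And>x::'a list. sub_k k x = {t. length t \<le> min (length x) k}"
    unfolding sub_k_def using subseq_unary[OF un] by auto
  show ?thesis
  proof
    assume "sim_k k u v"
    hence e: "{t::'a list. length t \<le> min (length u) k} = {t. length t \<le> min (length v) k}"
      unfolding sim_k_def S .
    have 1: "replicate (min (length u) k) a \<in> {t. length t \<le> min (length v) k}"
      by (subst e[symmetric]) simp
    have 2: "replicate (min (length v) k) a \<in> {t. length t \<le> min (length u) k}"
      by (subst e) simp
    show "min (length u) k = min (length v) k" using 1 2 by simp
  next
    assume "min (length u) k = min (length v) k"
    thus "sim_k k u v" unfolding sim_k_def S by simp
  qed
qed

lemma simR_unary:
  fixes a :: 'a
  assumes un: "(UNIV :: 'a set) = {a}"
  shows "simR_k k x y \<longleftrightarrow> min (length x) k = min (length (y::'a list)) k"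
proof
  assume s: "simR_k k x y"
  obtain y' where y': "prefix y' y" "sim_k k x y'" using s unfolding simR_k_def by blast
  have "length y' \<le> length y" using y'(1) by (rule prefix_length_le)
  moreover have "min (length x) k = min (length y') k" using y'(2) sim_unary[OF un, of k x y'] by simp
  ultimately have 1: "min (length x) k \<le> min (length y) k" by linarith
  obtain x' where x': "prefix x' x" "sim_k k x' y" using s unfolding simR_k_def by blast
  have "length x' \<le> length x" using x'(1) by (rule prefix_length_le)
  moreover have "min (length x') k = min (length y) k" using x'(2) sim_unary[OF un, of k x' y] by simp
  ultimately have 2: "min (length y) k \<le> min (length x) k" by linarith
  show "min (length x) k = min (length y) k" using 1 2 by simp
next
  assume e: "min (length x) k = min (length y) k"
  have A: "\<And>x y x'. min (length x) k = min (length (y::'a list)) k \<Longrightarrow> prefix x' x \<Longrightarrow>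
      \<exists>y'. prefix y' y \<and> sim_k k x' y'"
  proof -
    fix x y x' :: "'a list"
    assume e: "min (length x) k = min (length y) k" and p: "prefix x' x"
    have l: "length x' \<le> length x" by (rule prefix_length_le[OF p])
    have m: "min (min (length x') (length y)) k = min (length x') k" using e l
      by (simp add: min_def split: if_splits)
    have "sim_k k x' (take (length x') y)"
      using sim_unary[OF un, of k x' "take (length x') y"] m by (simp add: min.commute)
    moreover have "prefix (take (length x') y) y" by (rule take_is_prefix)
    ultimately show "\<exists>y'. prefix y' y \<and> sim_k k x' y'" by blast
  qed
  show "simR_k k x y" unfolding simR_k_def
  proof (intro conjI allI impI)
    fix x' assume "prefix x' x" thus "\<exists>y'. prefix y' y \<and> sim_k k x' y'" using A[OF e] by blast
  next
    fix y' assume "prefix y' y"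
    then obtain x' where "prefix x' x" "sim_k k y' x'" using A[OF e[symmetric]] by blast
    moreover have "sim_k k x' y'" using \<open>sim_k k y' x'\<close> unfolding sim_k_def by simp
    ultimately show "\<exists>x'. prefix x' x \<and> sim_k k x' y'" by blast
  qed
qed


lemma lang_long:
  fixes A :: "('s,'a) nfa" and a :: 'a
  assumes un: "(UNIV::'a set) = {a}" and po: "poNFA A"
    and lx: "card (states A) \<le> length x" and ly: "card (states A) \<le> length y"
    and x: "x \<in> lang A"
  shows "y \<in> lang A"
proof -
  have wf: "nfa_wf A" using po poNFA_def by blast
  obtain q q' where q: "q \<in> init A" "q' \<in> delta_star A q x" "q' \<in> final A"
    using x unfolding lang_def by blast
  have qS: "q \<in> states A" using q(1) wf unfolding nfa_wf_def by blast
  have "U A q \<subseteq> states A" unfolding U_def by blast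
  hence c: "card (U A q) \<le> card (states A)" using wf unfolding nfa_wf_def
    by (simp add: card_mono)
  have "q' \<in> delta_star A q y"
    by (rule stab[OF un po qS q(2)]) (use c lx ly in auto)
  thus ?thesis using q unfolding lang_def by blast
qed

definition autA :: "nat \<Rightarrow> 'a list set \<Rightarrow> 'a \<Rightarrow> (nat, 'a) nfa" where
  "autA k L a = \<lparr>states = {..k}, init = {0}, trans = (\<lambda>q x. {min (Suc q) k}),
     final = {i. i \<le> k \<and> replicate i a \<in> L}\<rparr>"

lemma autA_init: "init (autA k L a) = {0}" by (simp add: autA_def)
lemma autA_final: "final (autA k L a) = {i. i \<le> k \<and> replicate i a \<in> L}" by (simp add: autA_def)

lemma autA_delta:
  "q \<le> k \<Longrightarrow> delta_star (autA k L a) q w = {min (q + length w) k}"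
  by (induction w arbitrary: q) (auto simp: autA_def min_def)

lemma autA_reach:
  assumes "p \<le> k" "q \<le> k"
  shows "reach (autA k L a) p q \<longleftrightarrow> p \<le> q"
proof
  assume "reach (autA k L a) p q"
  then obtain w where "q \<in> delta_star (autA k L a) p w" unfolding reach_def by blast
  thus "p \<le> q" using autA_delta[OF assms(1), of L a w] assms by auto
next
  assume "p \<le> q"
  hence "q \<in> delta_star (autA k L a) p (replicate (q - p) a)"
    using autA_delta[OF assms(1), of L a "replicate (q - p) a"] assms by auto
  thus "reach (autA k L a) p q" unfolding reach_def by blast
qed

lemma autA_po: "poNFA (autA k L a)"
proof -
  have wf: "nfa_wf (autA k L a)" unfolding nfa_wf_def autA_def by auto
  have S: "states (autA k L a) = {..k}" unfolding autA_def by simp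
  have R: "\<And>p q. p \<in> states (autA k L a) \<Longrightarrow> q \<in> states (autA k L a) \<Longrightarrow>
      reach (autA k L a) p q \<longleftrightarrow> p \<le> q" using autA_reach S by simp
  show ?thesis unfolding poNFA_def by (simp add: R wf)
qed

theorem mainTheorem10:
  fixes a :: 'a and L :: "'a list set"
  assumes "(UNIV :: 'a set) = {a}"
  shows "(\<exists>A :: (nat, 'a) nfa. poNFA A \<and> lang A = L) \<longleftrightarrow> R_trivial L"
proof
  assume "\<exists>A :: (nat, 'a) nfa. poNFA A \<and> lang A = L"
  then obtain A :: "(nat,'a) nfa" where A: "poNFA A" "lang A = L" by blast
  have reg: "regular L" unfolding regular_def using A poNFA_def by blast
  define k where "k = card (states A)"
  have "\<forall>x y. simR_k k x y \<longrightarrow> (x \<in> L \<longleftrightarrow> y \<in> L)"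
  proof (intro allI impI)
    fix x y :: "'a list"
    assume "simR_k k x y"
    hence e: "min (length x) k = min (length y) k" using simR_unary[OF assms, of k x y] by simp
    show "x \<in> L \<longleftrightarrow> y \<in> L"
    proof (cases "length x = length y")
      case True
      have "x = y" using unary_eq[OF assms True] .
      thus ?thesis by simp
    next
      case False
      hence kx: "card (states A) \<le> length x" "card (states A) \<le> length y" using e k_def by auto
      have "x \<in> lang A \<longleftrightarrow> y \<in> lang A"
        using lang_long[OF assms A(1) kx(1) kx(2)] lang_long[OF assms A(1) kx(2) kx(1)] by blast
      thus ?thesis using A(2) by simp
    qed
  qed
  thus "R_trivial L" unfolding R_trivial_def using reg by blast
next
  assume "R_trivial L"
  hence "\<exists>k. \<forall>x y. simR_k k x y \<longrightarrow> (x \<in> L \<longleftrightarrow> y \<in> L)"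
    unfolding R_trivial_def by (rule conjunct2)
  then obtain k where k: "\<forall>x y. simR_k k x y \<longrightarrow> (x \<in> L \<longleftrightarrow> y \<in> L)" ..
  have "lang (autA k L a) = L"
  proof (intro set_eqI)
    fix w :: "'a list"
    have d: "delta_star (autA k L a) 0 w = {min (length w) k}"
      using autA_delta[of 0 k L a w] by simp
    have "w \<in> lang (autA k L a) \<longleftrightarrow>
        (\<exists>q\<in>{0}. delta_star (autA k L a) q w \<inter> final (autA k L a) \<noteq> {})"
      unfolding lang_def autA_init by (rule mem_Collect_eq)
    also have "\<dots> \<longleftrightarrow> delta_star (autA k L a) 0 w \<inter> final (autA k L a) \<noteq> {}" by blast
    also have "\<dots> \<longleftrightarrow> min (length w) k \<in> final (autA k L a)" unfolding d by blast
    also have "\<dots> \<longleftrightarrow> replicate (min (length w) k) a \<in> L" unfolding autA_final by simp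
    also have "\<dots> \<longleftrightarrow> w \<in> L"
    proof -
      have sr: "simR_k k w (replicate (min (length w) k) a)"
        using simR_unary[OF assms, of k w "replicate (min (length w) k) a"] by simp
      have e: "w \<in> L \<longleftrightarrow> replicate (min (length w) k) a \<in> L" by (rule k[rule_format, OF sr])
      show ?thesis by (simp only: e)
    qed
    finally show "w \<in> lang (autA k L a) \<longleftrightarrow> w \<in> L" .
  qed
  moreover have "poNFA (autA k L a)" by (rule autA_po)
  ultimately show "\<exists>A :: (nat, 'a) nfa. poNFA A \<and> lang A = L" by (intro exI[of _ "autA k L a"] conjI)
qed

end
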